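(* If the toric algebra $A_{\mathscr{E}}$ is consistent, then $\ker(\pi)$ equals the subgroup $L\subseteq\mathbb{Z}^{Q_1}$ generated by the vectors $v(p^+)-v(p^-)$ for which there is $q\in\mathscr{P}$ with $\partial_qW=p^++p^-$; that is, the quotient map $\operatorname{wt}:\mathbb{Z}^{Q_1}\to\Lambda=\mathbb{Z}^{Q_1}/L$ coincides with $\pi:\mathbb{Z}^{Q_1}\to\mathbb{Z}(Q)$. In particular, $A_{\mathscr{E}}$ is graded by the semigroup $\Lambda_+=\operatorname{wt}(\mathbb{N}^{Q_1})=\mathbb{N}(Q)$, a path $p$ having degree $\pi(v(p))$.
   Context: Let $\mathbb{k}$ be an algebraically closed field and $X=\operatorname{Spec}R$ a normal affine toric variety of dimension $n$ with a torus-fixed point, $R=\mathbb{k}[\sigma^\vee\cap M]$, $\sigma\subset N\otimes\mathbb{R}$ strongly convex rational polyhedral. Let $\sigma(1)$ be the rays, $d=|\sigma(1)|$, $v_\rho$ primitive generators, $D_\rho$ toric prime divisors, torus-invariant divisors identified with $\mathbb{Z}^d$, $\deg:\mathbb{Z}^d\to\operatorname{Cl}(X)$ the class map. Cox ring $\mathbb{k}[x_\rho]$, $x^D=\prod x_\rho^{D_\rho}$. Assume $X$ is Gorenstein: $(1,\dots,1)\in\mathbb{Z}^d$ lies in the image of $M$ under $u\mapsto\sum\langle u,v_\rho\rangle D_\rho$. Let $\mathscr{E}=(E_0=\mathcal{O}_X,E_1,\dots,E_r)$ be pairwise distinct rank one reflexive sheaves, $E_i=\mathcal{O}_X(D_i')$,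 and $Q$ its quiver of sections: vertices $0,\dots,r$; an arrow $a:i\to j$ with label $\operatorname{div}(a)\in\mathbb{N}^d$ for each irreducible $T_M$-invariant section $x^{\operatorname{div}(a)}$ of $\operatorname{Hom}(E_i,E_j)\cong H^0(\mathcal{O}_X(D_j'-D_i'))$ (irreducible: not in the image of multiplication through any $E_k$, $k\neq i,j$). Paths compose right to left; $\operatorname{div}(p)$ is the sum of labels of arrows of $p$; $v(p)=\sum_a(\text{number of times }a\text{ occurs in }p)\chi_a\in\mathbb{Z}^{Q_1}$. $J_{\mathscr{E}}$ is generated by $p^+-p^-$ over pairs of paths with equal head, tail and label; $A_{\mathscr{E}}=\mathbb{k}Q/J_{\mathscr{E}}$. A cycle $p$ is anticanonical if $x^{\operatorname{div}(p)}=\prod_\rho x_\rho$. For a path $q$, $\partial_qW$ is the sum of all paths $p$ such that $pq$ is an anticanonical cycle. $\mathscr{P}$ is the set of paths $q$ with $\partial_qW$ a sum of precisely two paths sharing neither initial nor final arrow; $J_W$ is generated by $p^+-p^-$ whenever $\partial_qW=p^++p^-$, $q\in\mathscr{P}$. $A_{\mathscr{E}}$ is consistent if $J_W=J_{\mathscr{E}}$. $\operatorname{Wt}(Q)=\{\theta\in\mathbb{Z}^{Q_0}:\sum\theta_i=0\}$; $\pi:\mathbb{Z}^{Q_1}\to\operatorname{Wt}(Q)\oplus\mathbb{Z}^d$, $\chi_a\mapsto(\chi_{\mathsf{h}(a)}-\chi_{\mathsf{t}(a)},\operatorname{div}(a))$; $\mathbb{Z}(Q)=\pi(\mathbb{Z}^{Q_1})$,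 $\mathbb{N}(Q)=\pi(\mathbb{N}^{Q_1})$. *)

theory Defs
  imports "HOL-Library.Poly_Mapping" "HOL-Computational_Algebra.Polynomial"
begin

text \<open>M = Z^n is modelled by functions nat => int (only components k < n matter);
  the primitive ray generators are v rho (rho < d), each a function nat => int.
  Torus-invariant divisors are functions nat => int (components rho < d).\<close>

definition pairing :: "nat \<Rightarrow> (nat \<Rightarrow> int) \<Rightarrow> (nat \<Rightarrow> int) \<Rightarrow> int" where
  "pairing n u w = (\<Sum>k<n. u k * w k)"

text \<open>Linear equivalence of torus-invariant divisors: D - D' = div(chi^u) for some u in M.\<close>
definition lin_equiv :: "nat \<Rightarrow> nat \<Rightarrow> (nat \<Rightarrow> nat \<Rightarrow> int) \<Rightarrow> (nat \<Rightarrow> int) \<Rightarrow> (nat \<Rightarrow> int) \<Rightarrow> bool" where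
  "lin_equiv n d v D D' \<longleftrightarrow> (\<exists>u. \<forall>\<rho><d. D \<rho> - D' \<rho> = pairing n u (v \<rho>))"

text \<open>x^E (E effective, E in N^d) is a T_M-invariant section of O_X(D) iff E ~ D.\<close>
definition is_section :: "nat \<Rightarrow> nat \<Rightarrow> (nat \<Rightarrow> nat \<Rightarrow> int) \<Rightarrow> (nat \<Rightarrow> int) \<Rightarrow> (nat \<Rightarrow> nat) \<Rightarrow> bool" where
  "is_section n d v D E \<longleftrightarrow> (\<forall>\<rho>\<ge>d. E \<rho> = 0) \<and> lin_equiv n d v (\<lambda>\<rho>. int (E \<rho>)) D"

text \<open>Irreducible T_M-invariant section x^E of Hom(E_i,E_j) = H^0(O_X(D_j - D_i)):
  not the identity, and not a product through E_k for any k different from i, j.\<close>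
definition irreducible_section ::
  "nat \<Rightarrow> nat \<Rightarrow> (nat \<Rightarrow> nat \<Rightarrow> int) \<Rightarrow> nat \<Rightarrow> (nat \<Rightarrow> nat \<Rightarrow> int) \<Rightarrow> nat \<Rightarrow> nat \<Rightarrow> (nat \<Rightarrow> nat) \<Rightarrow> bool" where
  "irreducible_section n d v r D i j E \<longleftrightarrow>
     is_section n d v (\<lambda>\<rho>. D j \<rho> - D i \<rho>) E \<and> E \<noteq> (\<lambda>_. 0) \<and>
     \<not> (\<exists>k\<le>r. k \<noteq> i \<and> k \<noteq> j \<and> (\<exists>E1 E2.
          is_section n d v (\<lambda>\<rho>. D k \<rho> - D i \<rho>) E1 \<and>
          is_section n d v (\<lambda>\<rho>. D j \<rho> - D k \<rho>) E2 \<and>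
          E = (\<lambda>\<rho>. E1 \<rho> + E2 \<rho>)))"

type_synonym arrow = "nat \<times> nat \<times> (nat \<Rightarrow> nat)"

definition atail :: "arrow \<Rightarrow> nat" where "atail a = fst a"
definition ahead :: "arrow \<Rightarrow> nat" where "ahead a = fst (snd a)"
definition alabel :: "arrow \<Rightarrow> nat \<Rightarrow> nat" where "alabel a = snd (snd a)"

definition quiver_arrows :: "nat \<Rightarrow> nat \<Rightarrow> (nat \<Rightarrow> nat \<Rightarrow> int) \<Rightarrow> nat \<Rightarrow> (nat \<Rightarrow> nat \<Rightarrow> int) \<Rightarrow> arrow set" where
  "quiver_arrows n d v r D = {(i, j, E). i \<le> r \<and> j \<le> r \<and> irreducible_section n d v r D i j E}"

text \<open>A path is (tail vertex, list of arrows in order of traversal). The path written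
  a_k ... a_1 (right to left) is (tail a_1, [a_1, ..., a_k]); (i, []) is the trivial path e_i.\<close>
type_synonym path = "nat \<times> arrow list"

definition ptail :: "path \<Rightarrow> nat" where "ptail p = fst p"
definition phead :: "path \<Rightarrow> nat" where
  "phead p = (if snd p = [] then fst p else ahead (last (snd p)))"

definition valid_path :: "nat \<Rightarrow> arrow set \<Rightarrow> path \<Rightarrow> bool" where
  "valid_path r Q1 p \<longleftrightarrow> fst p \<le> r \<and> set (snd p) \<subseteq> Q1 \<and>
     (snd p \<noteq> [] \<longrightarrow> atail (hd (snd p)) = fst p) \<and>
     successively (\<lambda>a b. ahead a = atail b) (snd p)"

text \<open>pcomp p q is the path pq (first q, then p).\<close>
definition pcomp :: "path \<Rightarrow> path \<Rightarrow> path" where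
  "pcomp p q = (fst q, snd q @ snd p)"

definition pdiv :: "path \<Rightarrow> nat \<Rightarrow> nat" where
  "pdiv p = (\<lambda>\<rho>. sum_list (map (\<lambda>a. alabel a \<rho>) (snd p)))"

definition anticanonical :: "nat \<Rightarrow> nat \<Rightarrow> arrow set \<Rightarrow> path \<Rightarrow> bool" where
  "anticanonical d r Q1 c \<longleftrightarrow> valid_path r Q1 c \<and> snd c \<noteq> [] \<and> phead c = ptail c \<and>
     (\<forall>\<rho><d. pdiv c \<rho> = 1)"

text \<open>The set of paths p occurring in partial_q W (each with coefficient one).\<close>
definition derivW :: "nat \<Rightarrow> nat \<Rightarrow> arrow set \<Rightarrow> path \<Rightarrow> path set" where
  "derivW d r Q1 q = {p. valid_path r Q1 p \<and> ptail p = phead q \<and> anticanonical d r Q1 (pcomp p q)}"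

definition share_initial :: "path \<Rightarrow> path \<Rightarrow> bool" where
  "share_initial p p' \<longleftrightarrow> snd p \<noteq> [] \<and> snd p' \<noteq> [] \<and> hd (snd p) = hd (snd p')"

definition share_final :: "path \<Rightarrow> path \<Rightarrow> bool" where
  "share_final p p' \<longleftrightarrow> snd p \<noteq> [] \<and> snd p' \<noteq> [] \<and> last (snd p) = last (snd p')"

definition Pset :: "nat \<Rightarrow> nat \<Rightarrow> arrow set \<Rightarrow> path set" where
  "Pset d r Q1 = {q. valid_path r Q1 q \<and> (\<exists>pp pm. derivW d r Q1 q = {pp, pm} \<and> pp \<noteq> pm \<and>
      \<not> share_initial pp pm \<and> \<not> share_final pp pm)}"

definition pa_path :: "path \<Rightarrow> (path \<Rightarrow>\<^sub>0 'k::field)" where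
  "pa_path p = Poly_Mapping.single p 1"

definition pa_mult :: "nat \<Rightarrow> arrow set \<Rightarrow> (path \<Rightarrow>\<^sub>0 'k::field) \<Rightarrow> (path \<Rightarrow>\<^sub>0 'k) \<Rightarrow> (path \<Rightarrow>\<^sub>0 'k)" where
  "pa_mult r Q1 x y = (\<Sum>p\<in>Poly_Mapping.keys x. \<Sum>q\<in>Poly_Mapping.keys y.
      if valid_path r Q1 p \<and> valid_path r Q1 q \<and> ptail p = phead q
      then Poly_Mapping.single (pcomp p q) (Poly_Mapping.lookup x p * Poly_Mapping.lookup y q) else 0)"

inductive_set ideal_gen :: "nat \<Rightarrow> arrow set \<Rightarrow> (path \<Rightarrow>\<^sub>0 'k::field) set \<Rightarrow> (path \<Rightarrow>\<^sub>0 'k) set"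
  for r Q1 S where
  zero: "0 \<in> ideal_gen r Q1 S"
| gen: "s \<in> S \<Longrightarrow> s \<in> ideal_gen r Q1 S"
| add: "x \<in> ideal_gen r Q1 S \<Longrightarrow> y \<in> ideal_gen r Q1 S \<Longrightarrow> x + y \<in> ideal_gen r Q1 S"
| lmult: "x \<in> ideal_gen r Q1 S \<Longrightarrow> pa_mult r Q1 u x \<in> ideal_gen r Q1 S"
| rmult: "x \<in> ideal_gen r Q1 S \<Longrightarrow> pa_mult r Q1 x u \<in> ideal_gen r Q1 S"

definition J_E :: "nat \<Rightarrow> arrow set \<Rightarrow> (path \<Rightarrow>\<^sub>0 'k::field) set" where
  "J_E r Q1 = ideal_gen r Q1 {pa_path p - pa_path p' | p p'.
      valid_path r Q1 p \<and> valid_path r Q1 p' \<and> ptail p = ptail p' \<and> phead p = phead p' \<and> pdiv p = pdiv p'}"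

definition J_W :: "nat \<Rightarrow> nat \<Rightarrow> arrow set \<Rightarrow> (path \<Rightarrow>\<^sub>0 'k::field) set" where
  "J_W d r Q1 = ideal_gen r Q1 {pa_path p - pa_path p' | p p' q.
      q \<in> Pset d r Q1 \<and> derivW d r Q1 q = {p, p'}}"

definition vvec :: "path \<Rightarrow> (arrow \<Rightarrow>\<^sub>0 int)" where
  "vvec p = sum_list (map (\<lambda>a. Poly_Mapping.single a 1) (snd p))"

text \<open>pi : Z^{Q_1} -> Wt(Q) (+) Z^d, with Wt(Q) inside functions on vertices.\<close>
definition pi_map :: "(arrow \<Rightarrow>\<^sub>0 int) \<Rightarrow> (nat \<Rightarrow> int) \<times> (nat \<Rightarrow> int)" where
  "pi_map w = ((\<lambda>i. \<Sum>a\<in>Poly_Mapping.keys w. Poly_Mapping.lookup w a * (of_bool (ahead a = i) - of_bool (atail a = i))),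
               (\<lambda>\<rho>. \<Sum>a\<in>Poly_Mapping.keys w. Poly_Mapping.lookup w a * int (alabel a \<rho>)))"

definition ker_pi :: "arrow set \<Rightarrow> (arrow \<Rightarrow>\<^sub>0 int) set" where
  "ker_pi Q1 = {w. Poly_Mapping.keys w \<subseteq> Q1 \<and> pi_map w = ((\<lambda>_. 0), (\<lambda>_. 0))}"

inductive_set zspan :: "('a \<Rightarrow>\<^sub>0 int) set \<Rightarrow> ('a \<Rightarrow>\<^sub>0 int) set" for S where
  zero: "0 \<in> zspan S"
| gen: "s \<in> S \<Longrightarrow> s \<in> zspan S"
| add: "x \<in> zspan S \<Longrightarrow> y \<in> zspan S \<Longrightarrow> x + y \<in> zspan S"
| neg: "x \<in> zspan S \<Longrightarrow> - x \<in> zspan S"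

definition L_lattice :: "nat \<Rightarrow> nat \<Rightarrow> arrow set \<Rightarrow> (arrow \<Rightarrow>\<^sub>0 int) set" where
  "L_lattice d r Q1 = zspan {vvec p - vvec p' | p p' q. q \<in> Pset d r Q1 \<and> derivW d r Q1 q = {p, p'}}"

definition homog_comp :: "(nat \<Rightarrow> int) \<times> (nat \<Rightarrow> int) \<Rightarrow> (path \<Rightarrow>\<^sub>0 'k::field) \<Rightarrow> (path \<Rightarrow>\<^sub>0 'k)" where
  "homog_comp \<gamma> x = Abs_poly_mapping (\<lambda>p. if pi_map (vvec p) = \<gamma> then Poly_Mapping.lookup x p else 0)"

end

theory Submission
  imports Defs
begin

lemma ptail_pcomp[simp]: "ptail (pcomp p q) = ptail q"
  by (simp add: ptail_def pcomp_def)

lemma phead_pcomp: "ptail p = phead q \<Longrightarrow> phead (pcomp p q) = phead p"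
  by (cases p; cases q) (auto simp: phead_def ptail_def pcomp_def)

lemma valid_pcomp:
  assumes "valid_path r Q1 p" "valid_path r Q1 q" "ptail p = phead q"
  shows "valid_path r Q1 (pcomp p q)"
proof -
  obtain a xs where p: "p = (a, xs)" by (cases p)
  obtain b ys where q: "q = (b, ys)" by (cases q)
  show ?thesis using assms unfolding p q
    by (auto simp: valid_path_def pcomp_def ptail_def phead_def successively_append_iff hd_append split: if_splits)
qed

lemma vvec_pcomp: "vvec (pcomp p q) = vvec q + vvec p"
  by (simp add: vvec_def pcomp_def)

lemma pdiv_pcomp: "pdiv (pcomp p q) \<rho> = pdiv q \<rho> + pdiv p \<rho>"
  by (simp add: pdiv_def pcomp_def)

lemma pi_alt:
  assumes "finite A" "Poly_Mapping.keys w \<subseteq> A"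
  shows "fst (pi_map w) i = (\<Sum>a\<in>A. Poly_Mapping.lookup w a * (of_bool (ahead a = i) - of_bool (atail a = i)))"
    and "snd (pi_map w) \<rho> = (\<Sum>a\<in>A. Poly_Mapping.lookup w a * int (alabel a \<rho>))"
  unfolding pi_map_def using assms
  by (auto intro!: sum.mono_neutral_left simp: in_keys_iff)

lemma pi_add:
  "fst (pi_map (x + y)) i = fst (pi_map x) i + fst (pi_map y) i"
  "snd (pi_map (x + y)) \<rho> = snd (pi_map x) \<rho> + snd (pi_map y) \<rho>"
proof -
  have f: "finite (Poly_Mapping.keys x \<union> Poly_Mapping.keys y)" by simp
  have kx: "Poly_Mapping.keys x \<subseteq> Poly_Mapping.keys x \<union> Poly_Mapping.keys y" by blast
  have ky: "Poly_Mapping.keys y \<subseteq> Poly_Mapping.keys x \<union> Poly_Mapping.keys y" by blast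
  have k: "Poly_Mapping.keys (x + y) \<subseteq> Poly_Mapping.keys x \<union> Poly_Mapping.keys y" by (rule keys_add)
  show "fst (pi_map (x + y)) i = fst (pi_map x) i + fst (pi_map y) i"
    unfolding pi_alt(1)[OF f k] pi_alt(1)[OF f kx] pi_alt(1)[OF f ky]
    by (simp add: lookup_add sum.distrib distrib_right)
  show "snd (pi_map (x + y)) \<rho> = snd (pi_map x) \<rho> + snd (pi_map y) \<rho>"
    unfolding pi_alt(2)[OF f k] pi_alt(2)[OF f kx] pi_alt(2)[OF f ky]
    by (simp add: lookup_add sum.distrib distrib_right)
qed

lemma pi_diff:
  "fst (pi_map (x - y)) i = fst (pi_map x) i - fst (pi_map y) i"
  "snd (pi_map (x - y)) \<rho> = snd (pi_map x) \<rho> - snd (pi_map y) \<rho>"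
proof -
  have f: "finite (Poly_Mapping.keys x \<union> Poly_Mapping.keys y)" by simp
  have kx: "Poly_Mapping.keys x \<subseteq> Poly_Mapping.keys x \<union> Poly_Mapping.keys y" by blast
  have ky: "Poly_Mapping.keys y \<subseteq> Poly_Mapping.keys x \<union> Poly_Mapping.keys y" by blast
  have k: "Poly_Mapping.keys (x - y) \<subseteq> Poly_Mapping.keys x \<union> Poly_Mapping.keys y" by (rule keys_diff)
  show "fst (pi_map (x - y)) i = fst (pi_map x) i - fst (pi_map y) i"
    unfolding pi_alt(1)[OF f k] pi_alt(1)[OF f kx] pi_alt(1)[OF f ky]
    by (simp add: lookup_minus sum_subtractf left_diff_distrib)
  show "snd (pi_map (x - y)) \<rho> = snd (pi_map x) \<rho> - snd (pi_map y) \<rho>"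
    unfolding pi_alt(2)[OF f k] pi_alt(2)[OF f kx] pi_alt(2)[OF f ky]
    by (simp add: lookup_minus sum_subtractf left_diff_distrib)
qed

lemma pi_neg:
  "fst (pi_map (- x)) i = - fst (pi_map x) i"
  "snd (pi_map (- x)) \<rho> = - snd (pi_map x) \<rho>"
  by (simp_all add: pi_map_def sum_negf)

lemma pi_zero: "pi_map 0 = ((\<lambda>_. 0), (\<lambda>_. 0))"
  by (simp add: pi_map_def)

lemma pi_single:
  "fst (pi_map (frag_of a)) i = of_bool (ahead a = i) - of_bool (atail a = i)"
  "snd (pi_map (frag_of a)) \<rho> = int (alabel a \<rho>)"
  by (simp_all add: pi_map_def)

lemma vvec_alt: "vvec p = sum_list (map frag_of (snd p))"
  by (simp add: vvec_def)

lemma pi2_vl: "snd (pi_map (sum_list (map frag_of xs))) \<rho> = int (sum_list (map (\<lambda>a. alabel a \<rho>) xs))"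
  by (induction xs) (simp_all add: pi_add pi_single pi_zero)

lemma pi1_vl: "xs \<noteq> [] \<Longrightarrow> successively (\<lambda>a b. ahead a = atail b) xs \<Longrightarrow>
   fst (pi_map (sum_list (map frag_of xs))) i = of_bool (ahead (last xs) = i) - of_bool (atail (hd xs) = i)"
proof (induction xs)
  case Nil then show ?case by simp
next
  case (Cons x xs)
  show ?case
  proof (cases "xs = []")
    case True then show ?thesis by (simp add: pi_single pi_add pi_zero)
  next
    case False
    with Cons have "successively (\<lambda>a b. ahead a = atail b) xs" "ahead x = atail (hd xs)"
      by (auto simp: successively_Cons)
    with Cons.IH False show ?thesis by (simp add: pi_single pi_add)
  qed
qed

lemma deg_valid:
  assumes "valid_path r Q1 p"
  shows "pi_map (vvec p) = ((\<lambda>i. of_bool (phead p = i) - of_bool (ptail p = i)), (\<lambda>\<rho>. int (pdiv p \<rho>)))"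
proof -
  have 2: "snd (pi_map (vvec p)) \<rho> = int (pdiv p \<rho>)" for \<rho>
    by (simp add: vvec_alt pi2_vl pdiv_def)
  have 1: "fst (pi_map (vvec p)) i = of_bool (phead p = i) - of_bool (ptail p = i)" for i
  proof (cases "snd p = []")
    case True then show ?thesis by (simp add: vvec_alt pi_zero phead_def ptail_def)
  next
    case False then show ?thesis using assms pi1_vl[OF False, of i]
      by (simp add: vvec_alt phead_def ptail_def valid_path_def)
  qed
  show ?thesis using 1 2 by (simp add: prod_eq_iff fun_eq_iff)
qed

lemma deg_eq:
  assumes "valid_path r Q1 p" "valid_path r Q1 p'" "ptail p = ptail p'" "phead p = phead p'" "pdiv p = pdiv p'"
  shows "pi_map (vvec p) = pi_map (vvec p')"
  using deg_valid[OF assms(1)] deg_valid[OF assms(2)] assms(3-5) by simp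

lemma zspan_diff: "x \<in> zspan S \<Longrightarrow> y \<in> zspan S \<Longrightarrow> x - y \<in> zspan S"
  by (metis diff_conv_add_uminus zspan.add zspan.neg)

lemma zspan_cmul: "x \<in> zspan S \<Longrightarrow> frag_cmul k x \<in> zspan S"
  by (rule frag_closure_minus_cmul[where P="\<lambda>z. z \<in> zspan S"]) (auto intro: zspan.zero zspan_diff)

lemma zspan_sum: "finite I \<Longrightarrow> (\<And>i. i \<in> I \<Longrightarrow> f i \<in> zspan S) \<Longrightarrow> sum f I \<in> zspan S"
  by (induction I rule: finite_induct) (auto intro: zspan.zero zspan.add)

lemma keys_vl: "Poly_Mapping.keys (sum_list (map frag_of xs)) \<subseteq> set xs"
  by (induction xs) (use keys_add in fastforce)+

lemma keys_vvec: "Poly_Mapping.keys (vvec p) \<subseteq> set (snd p)"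
  by (simp add: vvec_alt keys_vl)

lemma arrow_label_high:
  assumes "a \<in> quiver_arrows n d v r D" "\<rho> \<ge> d"
  shows "alabel a \<rho> = 0"
  using assms by (auto simp: quiver_arrows_def irreducible_section_def is_section_def alabel_def)

lemma pdiv_high:
  assumes "valid_path r (quiver_arrows n d v r D) p" "\<rho> \<ge> d"
  shows "pdiv p \<rho> = 0"
proof -
  have "\<forall>a\<in>set (snd p). alabel a \<rho> = 0"
    using assms arrow_label_high[OF _ assms(2)] by (auto simp: valid_path_def)
  then show ?thesis by (simp add: pdiv_def sum_list_eq_0_iff)
qed

lemma derivW_head:
  assumes "p \<in> derivW d r Q1 q"
  shows "valid_path r Q1 p" "ptail p = phead q" "phead p = ptail q" "\<forall>\<rho><d. pdiv q \<rho> + pdiv p \<rho> = 1"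
proof -
  have a: "anticanonical d r Q1 (pcomp p q)" and v: "valid_path r Q1 p" and t: "ptail p = phead q"
    using assms by (auto simp: derivW_def)
  show "valid_path r Q1 p" "ptail p = phead q" using v t by auto
  show "phead p = ptail q" using a phead_pcomp[OF t] by (auto simp: anticanonical_def)
  show "\<forall>\<rho><d. pdiv q \<rho> + pdiv p \<rho> = 1" using a by (auto simp: anticanonical_def pdiv_pcomp)
qed

lemma derivW_pair_same:
  assumes "p \<in> derivW d r (quiver_arrows n d v r D) q" "p' \<in> derivW d r (quiver_arrows n d v r D) q"
  shows "valid_path r (quiver_arrows n d v r D) p" "valid_path r (quiver_arrows n d v r D) p'"
    "ptail p = ptail p'" "phead p = phead p'" "pdiv p = pdiv p'"
proof -
  note A = derivW_head[OF assms(1)] and B = derivW_head[OF assms(2)]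
  show "valid_path r (quiver_arrows n d v r D) p" "valid_path r (quiver_arrows n d v r D) p'"
    "ptail p = ptail p'" "phead p = phead p'" using A B by auto
  show "pdiv p = pdiv p'"
  proof
    fix \<rho> show "pdiv p \<rho> = pdiv p' \<rho>"
    proof (cases "\<rho> < d")
      case True then show ?thesis using A(4) B(4) by (metis add_left_cancel)
    next
      case False then show ?thesis using pdiv_high A(1) B(1) by (metis not_less)
    qed
  qed
qed

lemma same_deg_ker:
  assumes "valid_path r Q1 p" "valid_path r Q1 p'" "ptail p = ptail p'" "phead p = phead p'" "pdiv p = pdiv p'"
  shows "vvec p - vvec p' \<in> ker_pi Q1"
proof -
  have "Poly_Mapping.keys (vvec p - vvec p') \<subseteq> Q1"
  proof -
    have "set (snd p) \<subseteq> Q1" "set (snd p') \<subseteq> Q1" using assms(1,2) by (auto simp: valid_path_def)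
    then show ?thesis using keys_diff[of "vvec p" "vvec p'"] keys_vvec[of p] keys_vvec[of p'] by blast
  qed
  moreover have "pi_map (vvec p - vvec p') = ((\<lambda>_. 0), (\<lambda>_. 0))"
    using deg_eq[OF assms] by (simp add: prod_eq_iff fun_eq_iff pi_diff)
  ultimately show ?thesis by (simp add: ker_pi_def)
qed

lemma ker_closed:
  "0 \<in> ker_pi Q1"
  "x \<in> ker_pi Q1 \<Longrightarrow> y \<in> ker_pi Q1 \<Longrightarrow> x + y \<in> ker_pi Q1"
  "x \<in> ker_pi Q1 \<Longrightarrow> - x \<in> ker_pi Q1"
proof -
  show "0 \<in> ker_pi Q1" by (simp add: ker_pi_def pi_zero)
  show "x \<in> ker_pi Q1 \<Longrightarrow> y \<in> ker_pi Q1 \<Longrightarrow> x + y \<in> ker_pi Q1"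
    using keys_add[of x y] by (auto simp: ker_pi_def prod_eq_iff fun_eq_iff pi_add)
  show "x \<in> ker_pi Q1 \<Longrightarrow> - x \<in> ker_pi Q1"
    by (auto simp: ker_pi_def prod_eq_iff fun_eq_iff pi_neg)
qed

lemma L_sub_ker: "L_lattice d r (quiver_arrows n d v r D) \<subseteq> ker_pi (quiver_arrows n d v r D)"
proof
  fix x assume "x \<in> L_lattice d r (quiver_arrows n d v r D)"
  then show "x \<in> ker_pi (quiver_arrows n d v r D)"
    unfolding L_lattice_def
  proof (induction rule: zspan.induct)
    case zero then show ?case by (rule ker_closed)
  next
    case (gen s)
    then obtain p p' q where s: "s = vvec p - vvec p'" and dq: "derivW d r (quiver_arrows n d v r D) q = {p, p'}"
      by blast
    then have "p \<in> derivW d r (quiver_arrows n d v r D) q" "p' \<in> derivW d r (quiver_arrows n d v r D) q"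
      by auto
    from derivW_pair_same[OF this] show ?case unfolding s by (rule same_deg_ker)
  next
    case (add x y) then show ?case by (blast intro: ker_closed)
  next
    case (neg x) then show ?case by (blast intro: ker_closed)
  qed
qed

section \<open>Path existence\<close>

lemma section_exists:
  assumes gor: "\<exists>u. \<forall>\<rho><d. pairing n u (v \<rho>) = 1"
  shows "\<exists>E. is_section n d v (\<lambda>\<rho>. D j \<rho> - D i \<rho>) E"
proof -
  obtain u0 where u0: "\<forall>\<rho><d. pairing n u0 (v \<rho>) = 1" using gor by blast
  define N where "N = (\<Sum>\<rho><d. \<bar>D j \<rho> - D i \<rho>\<bar>)"
  define E where "E = (\<lambda>\<rho>. if \<rho> < d then nat (N + (D j \<rho> - D i \<rho>)) else 0)"
  have le: "\<bar>D j \<rho> - D i \<rho>\<bar> \<le> N" if "\<rho> < d" for \<rho>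
    unfolding N_def using that by (intro member_le_sum) auto
  have pu: "pairing n (\<lambda>k. N * u0 k) (v \<rho>) = N * pairing n u0 (v \<rho>)" for \<rho>
    by (simp add: pairing_def sum_distrib_left mult.assoc)
  have "is_section n d v (\<lambda>\<rho>. D j \<rho> - D i \<rho>) E"
    unfolding is_section_def lin_equiv_def
  proof (intro conjI allI impI exI[of _ "\<lambda>k. N * u0 k"])
    fix \<rho> :: nat assume "d \<le> \<rho>" then show "E \<rho> = 0" by (simp add: E_def)
  next
    fix \<rho> :: nat assume r: "\<rho> < d"
    have "N + (D j \<rho> - D i \<rho>) \<ge> 0" using le[OF r] by linarith
    then show "int (E \<rho>) - (D j \<rho> - D i \<rho>) = pairing n (\<lambda>k. N * u0 k) (v \<rho>)"
      using r u0 by (simp add: E_def pu)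
  qed
  then show ?thesis by blast
qed

lemma path_exists_aux:
  assumes distinct: "\<forall>i\<le>r. \<forall>j\<le>r. i \<noteq> j \<longrightarrow> \<not> lin_equiv n d v (D i) (D j)"
  shows "\<forall>i j E. i \<le> r \<longrightarrow> j \<le> r \<longrightarrow> is_section n d v (\<lambda>\<rho>. D j \<rho> - D i \<rho>) E \<longrightarrow>
          (\<Sum>\<rho><d. E \<rho>) = m \<longrightarrow>
          (\<exists>p. valid_path r (quiver_arrows n d v r D) p \<and> ptail p = i \<and> phead p = j)"
proof (induction m rule: less_induct)
  case (less m)
  show ?case
  proof (intro allI impI)
    fix i j E
    assume ir: "i \<le> r" and jr: "j \<le> r" and sec: "is_section n d v (\<lambda>\<rho>. D j \<rho> - D i \<rho>) E"
      and sm: "(\<Sum>\<rho><d. E \<rho>) = m"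
    have zero_equiv: "lin_equiv n d v (D a) (D b)"
      if "is_section n d v (\<lambda>\<rho>. D b \<rho> - D a \<rho>) (\<lambda>_. 0)" for a b
    proof -
      from that obtain u where "\<forall>\<rho><d. 0 - (D b \<rho> - D a \<rho>) = pairing n u (v \<rho>)"
        by (auto simp: is_section_def lin_equiv_def)
      then show ?thesis by (auto simp: lin_equiv_def)
    qed
    show "\<exists>p. valid_path r (quiver_arrows n d v r D) p \<and> ptail p = i \<and> phead p = j"
    proof (cases "E = (\<lambda>_. 0)")
      case True
      then have "lin_equiv n d v (D i) (D j)" using sec zero_equiv by blast
      then have "i = j" using distinct ir jr by blast
      then show ?thesis using ir
        by (intro exI[of _ "(i, [])"]) (simp add: valid_path_def ptail_def phead_def)
    next
      case E0: False
      show ?thesis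
      proof (cases "irreducible_section n d v r D i j E")
        case True
        then have "(i, j, E) \<in> quiver_arrows n d v r D" using ir jr by (simp add: quiver_arrows_def)
        then show ?thesis using ir
          by (intro exI[of _ "(i, [(i, j, E)])"])
             (simp add: valid_path_def ptail_def phead_def atail_def ahead_def)
      next
        case False
        then obtain k E1 E2 where k: "k \<le> r" "k \<noteq> i" "k \<noteq> j"
          and s1: "is_section n d v (\<lambda>\<rho>. D k \<rho> - D i \<rho>) E1"
          and s2: "is_section n d v (\<lambda>\<rho>. D j \<rho> - D k \<rho>) E2"
          and EE: "E = (\<lambda>\<rho>. E1 \<rho> + E2 \<rho>)"
          using sec E0 unfolding irreducible_section_def by blast
        have E1nz: "E1 \<noteq> (\<lambda>_. 0)"
        proof
          assume "E1 = (\<lambda>_. 0)"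
          then have "lin_equiv n d v (D i) (D k)" using s1 zero_equiv by blast
          then show False using distinct ir k by blast
        qed
        have E2nz: "E2 \<noteq> (\<lambda>_. 0)"
        proof
          assume "E2 = (\<lambda>_. 0)"
          then have "lin_equiv n d v (D k) (D j)" using s2 zero_equiv by blast
          then show False using distinct jr k by blast
        qed
        have pos: "(\<Sum>\<rho><d. F \<rho>) > 0" if "F \<noteq> (\<lambda>_. 0)" "\<forall>\<rho>\<ge>d. F \<rho> = (0::nat)" for F
        proof (rule ccontr)
          assume "\<not> (\<Sum>\<rho><d. F \<rho>) > 0"
          then have "\<forall>\<rho><d. F \<rho> = 0" by simp
          with that show False by (metis ext not_less)
        qed
        have p1: "(\<Sum>\<rho><d. E1 \<rho>) > 0" using pos[OF E1nz] s1 by (simp add: is_section_def)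
        have p2: "(\<Sum>\<rho><d. E2 \<rho>) > 0" using pos[OF E2nz] s2 by (simp add: is_section_def)
        have ssum: "(\<Sum>\<rho><d. E \<rho>) = (\<Sum>\<rho><d. E1 \<rho>) + (\<Sum>\<rho><d. E2 \<rho>)"
          by (simp add: EE sum.distrib)
        have lt1: "(\<Sum>\<rho><d. E1 \<rho>) < m" using ssum sm p2 by linarith
        have lt2: "(\<Sum>\<rho><d. E2 \<rho>) < m" using ssum sm p1 by linarith
        have "\<exists>p. valid_path r (quiver_arrows n d v r D) p \<and> ptail p = i \<and> phead p = k"
          using less.IH[OF lt1] ir k(1) s1 by blast
        then obtain q1 where q1: "valid_path r (quiver_arrows n d v r D) q1" "ptail q1 = i" "phead q1 = k"
          by blast
        have "\<exists>p. valid_path r (quiver_arrows n d v r D) p \<and> ptail p = k \<and> phead p = j"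
          using less.IH[OF lt2] jr k(1) s2 by blast
        then obtain q2 where q2: "valid_path r (quiver_arrows n d v r D) q2" "ptail q2 = k" "phead q2 = j"
          by blast
        have "ptail q2 = phead q1" using q1 q2 by simp
        then show ?thesis using q1 q2
          by (intro exI[of _ "pcomp q2 q1"]) (simp add: valid_pcomp phead_pcomp)
      qed
    qed
  qed
qed

lemma path_exists:
  assumes gor: "\<exists>u. \<forall>\<rho><d. pairing n u (v \<rho>) = 1"
    and distinct: "\<forall>i\<le>r. \<forall>j\<le>r. i \<noteq> j \<longrightarrow> \<not> lin_equiv n d v (D i) (D j)"
    and "i \<le> r" "j \<le> r"
  shows "\<exists>p. valid_path r (quiver_arrows n d v r D) p \<and> ptail p = i \<and> phead p = j"
proof -
  obtain E where "is_section n d v (\<lambda>\<rho>. D j \<rho> - D i \<rho>) E" using section_exists[OF gor, where D=D and i=i and j=j] by blast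
  then show ?thesis using path_exists_aux[OF distinct] assms(3,4) by blast
qed

section \<open>Invariant for ideals\<close>

definition csum :: "path set \<Rightarrow> (path \<Rightarrow>\<^sub>0 'k::field) \<Rightarrow> 'k" where
  "csum C x = (\<Sum>p\<in>Poly_Mapping.keys x \<inter> C. Poly_Mapping.lookup x p)"

definition Cls :: "nat \<Rightarrow> arrow set \<Rightarrow> (arrow \<Rightarrow>\<^sub>0 int) set \<Rightarrow> nat \<Rightarrow> nat \<Rightarrow> (arrow \<Rightarrow>\<^sub>0 int) \<Rightarrow> path set" where
  "Cls r Q1 Ls i j c = {p. valid_path r Q1 p \<and> ptail p = i \<and> phead p = j \<and> vvec p - c \<in> Ls}"

lemma csum_alt:
  assumes "finite A" "Poly_Mapping.keys x \<subseteq> A"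
  shows "csum C x = (\<Sum>p\<in>A \<inter> C. Poly_Mapping.lookup x p)"
  unfolding csum_def using assms
  by (intro sum.mono_neutral_left) (auto simp: in_keys_iff)

lemma csum_add: "csum C (x + y) = csum C x + csum C y"
proof -
  have f: "finite (Poly_Mapping.keys x \<union> Poly_Mapping.keys y)" by simp
  have kx: "Poly_Mapping.keys x \<subseteq> Poly_Mapping.keys x \<union> Poly_Mapping.keys y" by blast
  have ky: "Poly_Mapping.keys y \<subseteq> Poly_Mapping.keys x \<union> Poly_Mapping.keys y" by blast
  show ?thesis unfolding csum_alt[OF f keys_add] csum_alt[OF f kx] csum_alt[OF f ky]
    by (simp add: lookup_add sum.distrib)
qed

lemma csum_diff: "csum C (x - y) = csum C x - csum C y"
proof -
  have f: "finite (Poly_Mapping.keys x \<union> Poly_Mapping.keys y)" by simp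
  have kx: "Poly_Mapping.keys x \<subseteq> Poly_Mapping.keys x \<union> Poly_Mapping.keys y" by blast
  have ky: "Poly_Mapping.keys y \<subseteq> Poly_Mapping.keys x \<union> Poly_Mapping.keys y" by blast
  show ?thesis unfolding csum_alt[OF f keys_diff] csum_alt[OF f kx] csum_alt[OF f ky]
    by (simp add: lookup_minus sum_subtractf)
qed

lemma csum_zero[simp]: "csum C 0 = 0"
  by (simp add: csum_def)

lemma csum_single: "csum C (Poly_Mapping.single t c) = (if t \<in> C then c else 0)"
proof -
  have "csum C (Poly_Mapping.single t c) = (\<Sum>p\<in>{t} \<inter> C. Poly_Mapping.lookup (Poly_Mapping.single t c) p)"
    by (rule csum_alt) simp_all
  then show ?thesis by (cases "t \<in> C") auto
qed

lemma csum_sum: "csum C (sum f I) = (\<Sum>i\<in>I. csum C (f i))"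
  by (induction I rule: infinite_finite_induct) (simp_all add: csum_add)

lemma csum_if: "csum C (if b then x else 0) = (if b then csum C x else 0)"
  by simp

lemma sum_if_restrict:
  "finite A \<Longrightarrow> (\<Sum>q\<in>A. if B \<and> q \<in> C then f q else 0) = (if B then (\<Sum>q\<in>A \<inter> C. f q) else 0)"
  by (cases B) (simp_all add: sum.inter_restrict)

lemma inv_lemma:
  fixes S :: "(path \<Rightarrow>\<^sub>0 'k::field) set"
  assumes "x \<in> ideal_gen r Q1 S" "\<forall>s\<in>S. \<forall>i j c. csum (Cls r Q1 Ls i j c) s = 0"
  shows "\<forall>i j c. csum (Cls r Q1 Ls i j c) x = 0"
  using assms(1)
proof induction
  case zero then show ?case by simp
next
  case (gen s) then show ?case using assms(2) by blast
next
  case (add x y) then show ?case by (simp add: csum_add)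
next
  case (lmult x u)
  show ?case
  proof (intro allI)
    fix i j c
    let ?C = "Cls r Q1 Ls i j c"
    have T: "csum ?C (if valid_path r Q1 p \<and> valid_path r Q1 q \<and> ptail p = phead q
              then Poly_Mapping.single (pcomp p q) (Poly_Mapping.lookup u p * Poly_Mapping.lookup x q) else 0)
           = (if (valid_path r Q1 p \<and> phead p = j) \<and> q \<in> Cls r Q1 Ls i (ptail p) (c - vvec p)
              then Poly_Mapping.lookup u p * Poly_Mapping.lookup x q else 0)" for p q
    proof (cases "valid_path r Q1 p \<and> valid_path r Q1 q \<and> ptail p = phead q")
      case True
      then have "pcomp p q \<in> ?C \<longleftrightarrow> (valid_path r Q1 p \<and> phead p = j) \<and> q \<in> Cls r Q1 Ls i (ptail p) (c - vvec p)"
        by (auto simp: Cls_def valid_pcomp phead_pcomp vvec_pcomp algebra_simps)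
      then show ?thesis using True by (simp add: csum_single)
    next
      case False then show ?thesis by (auto simp: Cls_def)
    qed
    have "csum ?C (pa_mult r Q1 u x) = (\<Sum>p\<in>Poly_Mapping.keys u. \<Sum>q\<in>Poly_Mapping.keys x.
        (if (valid_path r Q1 p \<and> phead p = j) \<and> q \<in> Cls r Q1 Ls i (ptail p) (c - vvec p)
              then Poly_Mapping.lookup u p * Poly_Mapping.lookup x q else 0))"
      unfolding pa_mult_def csum_sum T ..
    also have "\<dots> = (\<Sum>p\<in>Poly_Mapping.keys u. if valid_path r Q1 p \<and> phead p = j then
        Poly_Mapping.lookup u p * csum (Cls r Q1 Ls i (ptail p) (c - vvec p)) x else 0)"
    proof (rule sum.cong[OF refl])
      fix p
      show "(\<Sum>q\<in>Poly_Mapping.keys x.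
        (if (valid_path r Q1 p \<and> phead p = j) \<and> q \<in> Cls r Q1 Ls i (ptail p) (c - vvec p)
              then Poly_Mapping.lookup u p * Poly_Mapping.lookup x q else 0)) =
        (if valid_path r Q1 p \<and> phead p = j then
        Poly_Mapping.lookup u p * csum (Cls r Q1 Ls i (ptail p) (c - vvec p)) x else 0)"
        by (simp only: sum_if_restrict[OF finite_keys]) (simp add: csum_def sum_distrib_left)
    qed
    also have "\<dots> = 0" using lmult.IH by (intro sum.neutral) auto
    finally show "csum ?C (pa_mult r Q1 u x) = 0" .
  qed
next
  case (rmult x u)
  show ?case
  proof (intro allI)
    fix i j c
    let ?C = "Cls r Q1 Ls i j c"
    have T: "csum ?C (if valid_path r Q1 p \<and> valid_path r Q1 q \<and> ptail p = phead q
              then Poly_Mapping.single (pcomp p q) (Poly_Mapping.lookup x p * Poly_Mapping.lookup u q) else 0)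
           = (if (valid_path r Q1 q \<and> ptail q = i) \<and> p \<in> Cls r Q1 Ls (phead q) j (c - vvec q)
              then Poly_Mapping.lookup x p * Poly_Mapping.lookup u q else 0)" for p q
    proof (cases "valid_path r Q1 p \<and> valid_path r Q1 q \<and> ptail p = phead q")
      case True
      then have "pcomp p q \<in> ?C \<longleftrightarrow> (valid_path r Q1 q \<and> ptail q = i) \<and> p \<in> Cls r Q1 Ls (phead q) j (c - vvec q)"
        by (auto simp: Cls_def valid_pcomp phead_pcomp vvec_pcomp algebra_simps)
      then show ?thesis using True by (simp add: csum_single)
    next
      case False then show ?thesis by (auto simp: Cls_def)
    qed
    have "csum ?C (pa_mult r Q1 x u) = (\<Sum>p\<in>Poly_Mapping.keys x. \<Sum>q\<in>Poly_Mapping.keys u.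
        (if (valid_path r Q1 q \<and> ptail q = i) \<and> p \<in> Cls r Q1 Ls (phead q) j (c - vvec q)
              then Poly_Mapping.lookup x p * Poly_Mapping.lookup u q else 0))"
      unfolding pa_mult_def csum_sum T ..
    also have "\<dots> = (\<Sum>q\<in>Poly_Mapping.keys u. \<Sum>p\<in>Poly_Mapping.keys x.
        (if (valid_path r Q1 q \<and> ptail q = i) \<and> p \<in> Cls r Q1 Ls (phead q) j (c - vvec q)
              then Poly_Mapping.lookup x p * Poly_Mapping.lookup u q else 0))"
      by (rule sum.swap)
    also have "\<dots> = (\<Sum>q\<in>Poly_Mapping.keys u. if valid_path r Q1 q \<and> ptail q = i then
        csum (Cls r Q1 Ls (phead q) j (c - vvec q)) x * Poly_Mapping.lookup u q else 0)"
    proof (rule sum.cong[OF refl])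
      fix q
      show "(\<Sum>p\<in>Poly_Mapping.keys x.
        (if (valid_path r Q1 q \<and> ptail q = i) \<and> p \<in> Cls r Q1 Ls (phead q) j (c - vvec q)
              then Poly_Mapping.lookup x p * Poly_Mapping.lookup u q else 0)) =
        (if valid_path r Q1 q \<and> ptail q = i then
        csum (Cls r Q1 Ls (phead q) j (c - vvec q)) x * Poly_Mapping.lookup u q else 0)"
        by (simp only: sum_if_restrict[OF finite_keys]) (simp add: csum_def sum_distrib_right)
    qed
    also have "\<dots> = 0" using rmult.IH by (intro sum.neutral) auto
    finally show "csum ?C (pa_mult r Q1 x u) = 0" .
  qed
qed

section \<open>Kernel decomposes into closed walks\<close>

lemma sum_delta_cmul:
  assumes "finite A"
  shows "(\<Sum>i\<in>A. frag_cmul (of_bool (h = i)) (g i)) = (if h \<in> A then g h else 0)"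
proof -
  have "(\<Sum>i\<in>A. frag_cmul (of_bool (h = i)) (g i)) = (\<Sum>i\<in>A. if h = i then g i else 0)"
    by (rule sum.cong) auto
  then show ?thesis using assms by (simp add: sum.delta)
qed

lemma ker_closed_walks:
  assumes conn: "\<forall>i\<le>r. \<forall>j\<le>r. \<exists>p. valid_path r Q1 p \<and> ptail p = i \<and> phead p = j"
    and arr: "\<forall>a\<in>Q1. atail a \<le> r \<and> ahead a \<le> r"
    and w: "w \<in> ker_pi Q1"
  shows "\<exists>P N. valid_path r Q1 P \<and> valid_path r Q1 N \<and> ptail P = 0 \<and> phead P = 0 \<and>
           ptail N = 0 \<and> phead N = 0 \<and> w = vvec P - vvec N"
proof -
  have "\<forall>i. \<exists>p. i \<le> r \<longrightarrow> valid_path r Q1 p \<and> ptail p = 0 \<and> phead p = i" using conn by auto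
  then obtain \<gamma> where \<gamma>: "\<And>i. i \<le> r \<Longrightarrow> valid_path r Q1 (\<gamma> i) \<and> ptail (\<gamma> i) = 0 \<and> phead (\<gamma> i) = i"
    by metis
  have "\<forall>i. \<exists>p. i \<le> r \<longrightarrow> valid_path r Q1 p \<and> ptail p = i \<and> phead p = 0" using conn by auto
  then obtain \<delta> where \<delta>: "\<And>i. i \<le> r \<Longrightarrow> valid_path r Q1 (\<delta> i) \<and> ptail (\<delta> i) = i \<and> phead (\<delta> i) = 0"
    by metis
  define S0 where "S0 = {vvec P - vvec N | P N. valid_path r Q1 P \<and> valid_path r Q1 N \<and>
     ptail P = 0 \<and> ptail N = 0 \<and> phead P = phead N}"
  define CW where "CW = (\<lambda>x. \<exists>P N. valid_path r Q1 P \<and> valid_path r Q1 N \<and> ptail P = 0 \<and> phead P = 0 \<and>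
           ptail N = 0 \<and> phead N = 0 \<and> x = vvec P - vvec N)"
  have triv: "valid_path r Q1 (0, [])" "ptail (0, []) = 0" "phead (0, []) = 0" "vvec (0, []) = 0"
    by (simp_all add: valid_path_def ptail_def phead_def vvec_def)
  have G: "CW x" if "x \<in> zspan S0" for x
    using that
  proof induction
    case zero then show ?case unfolding CW_def using triv by (intro exI[of _ "(0, [])"]) auto
  next
    case (gen s)
    then obtain P N where PN: "s = vvec P - vvec N" "valid_path r Q1 P" "valid_path r Q1 N"
      "ptail P = 0" "ptail N = 0" "phead P = phead N" unfolding S0_def by blast
    have hr: "phead P \<le> r"
    proof (cases "snd P = []")
      case True then show ?thesis using PN(2) by (simp add: phead_def valid_path_def)
    next
      case False
      then have "last (snd P) \<in> Q1" using PN(2) by (auto simp: valid_path_def)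
      then show ?thesis using arr False by (simp add: phead_def)
    qed
    let ?d = "\<delta> (phead P)"
    have d: "valid_path r Q1 ?d" "ptail ?d = phead P" "phead ?d = 0" using \<delta>[OF hr] by auto
    have "valid_path r Q1 (pcomp ?d P)" "valid_path r Q1 (pcomp ?d N)"
      using valid_pcomp d PN by auto
    moreover have "phead (pcomp ?d P) = 0" "phead (pcomp ?d N) = 0"
      using phead_pcomp d PN by auto
    moreover have "s = vvec (pcomp ?d P) - vvec (pcomp ?d N)"
      by (simp add: vvec_pcomp PN(1))
    ultimately show ?case unfolding CW_def using PN by (intro exI[of _ "pcomp ?d P"] exI[of _ "pcomp ?d N"]) auto
  next
    case (add x y)
    then obtain P1 N1 P2 N2 where A: "valid_path r Q1 P1" "valid_path r Q1 N1" "ptail P1 = 0" "phead P1 = 0"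
           "ptail N1 = 0" "phead N1 = 0" "x = vvec P1 - vvec N1"
      and B: "valid_path r Q1 P2" "valid_path r Q1 N2" "ptail P2 = 0" "phead P2 = 0"
           "ptail N2 = 0" "phead N2 = 0" "y = vvec P2 - vvec N2"
      unfolding CW_def by blast
    have "valid_path r Q1 (pcomp P1 P2)" "valid_path r Q1 (pcomp N1 N2)"
      using valid_pcomp A B by auto
    moreover have "phead (pcomp P1 P2) = 0" "phead (pcomp N1 N2) = 0"
      using phead_pcomp A B by auto
    moreover have "x + y = vvec (pcomp P1 P2) - vvec (pcomp N1 N2)"
      by (simp add: vvec_pcomp A(7) B(7))
    ultimately show ?case unfolding CW_def using A B
      by (intro exI[of _ "pcomp P1 P2"] exI[of _ "pcomp N1 N2"]) auto
  next
    case (neg x)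
    then obtain P N where "valid_path r Q1 P" "valid_path r Q1 N" "ptail P = 0" "phead P = 0"
           "ptail N = 0" "phead N = 0" "x = vvec P - vvec N" unfolding CW_def by blast
    then show ?case unfolding CW_def by (intro exI[of _ N] exI[of _ P]) auto
  qed
  have main: "z - (\<Sum>i\<in>{..r}. frag_cmul (fst (pi_map z) i) (vvec (\<gamma> i))) \<in> zspan S0"
    if "Poly_Mapping.keys z \<subseteq> Q1" for z
    using that
  proof (induction z rule: frag_induction)
    case zero then show ?case by (simp add: pi_zero zspan.zero)
  next
    case (one a)
    then have tr: "atail a \<le> r" and hr: "ahead a \<le> r" using arr by auto
    have sumeq: "(\<Sum>i\<in>{..r}. frag_cmul (fst (pi_map (frag_of a)) i) (vvec (\<gamma> i)))
        = vvec (\<gamma> (ahead a)) - vvec (\<gamma> (atail a))"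
      using tr hr by (simp add: pi_single frag_cmul_diff_distrib sum_subtractf sum_delta_cmul)
    let ?p = "pcomp (atail a, [a]) (\<gamma> (atail a))"
    have pa: "valid_path r Q1 (atail a, [a])" "ptail (atail a, [a]) = atail a" "phead (atail a, [a]) = ahead a"
      using one tr by (simp_all add: valid_path_def ptail_def phead_def)
    have g: "valid_path r Q1 (\<gamma> (atail a))" "ptail (\<gamma> (atail a)) = 0" "phead (\<gamma> (atail a)) = atail a"
      using \<gamma>[OF tr] by auto
    have eq: "ptail (atail a, [a]) = phead (\<gamma> (atail a))" using pa g by simp
    have pv: "valid_path r Q1 ?p" by (rule valid_pcomp[OF pa(1) g(1) eq])
    have pt: "ptail ?p = 0" using g by simp
    have ph: "phead ?p = ahead a" using phead_pcomp[OF eq] pa by simp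
    have pvv: "vvec ?p = vvec (\<gamma> (atail a)) + frag_of a"
      unfolding vvec_pcomp by (simp add: vvec_def)
    have gh: "valid_path r Q1 (\<gamma> (ahead a))" "ptail (\<gamma> (ahead a)) = 0" "phead (\<gamma> (ahead a)) = ahead a"
      using \<gamma>[OF hr] by auto
    have e1: "frag_of a - (\<Sum>i\<in>{..r}. frag_cmul (fst (pi_map (frag_of a)) i) (vvec (\<gamma> i)))
        = vvec ?p - vvec (\<gamma> (ahead a))"
      unfolding sumeq pvv by (simp add: algebra_simps)
    have e2: "vvec ?p - vvec (\<gamma> (ahead a)) \<in> S0"
      unfolding S0_def mem_Collect_eq
      by (rule exI[of _ ?p], rule exI[of _ "\<gamma> (ahead a)"]) (simp only: pv pt ph gh simp_thms)
    from e1 e2 show ?case by (simp add: zspan.gen)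
  next
    case (diff a b)
    have s: "(\<Sum>i\<in>{..r}. frag_cmul (fst (pi_map (a - b)) i) (vvec (\<gamma> i)))
      = (\<Sum>i\<in>{..r}. frag_cmul (fst (pi_map a) i) (vvec (\<gamma> i)))
        - (\<Sum>i\<in>{..r}. frag_cmul (fst (pi_map b) i) (vvec (\<gamma> i)))"
      by (simp add: pi_diff frag_cmul_diff_distrib sum_subtractf)
    have e: "(a - b) - (\<Sum>i\<in>{..r}. frag_cmul (fst (pi_map (a - b)) i) (vvec (\<gamma> i)))
      = (a - (\<Sum>i\<in>{..r}. frag_cmul (fst (pi_map a) i) (vvec (\<gamma> i))))
        - (b - (\<Sum>i\<in>{..r}. frag_cmul (fst (pi_map b) i) (vvec (\<gamma> i))))"
      unfolding s by (simp add: diff_diff_eq diff_diff_eq2 diff_add_eq add.commute add.left_commute)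
    show ?case unfolding e by (rule zspan_diff[OF diff(1) diff(2)])
  qed
  have wk: "Poly_Mapping.keys w \<subseteq> Q1" and w0: "pi_map w = ((\<lambda>_. 0), (\<lambda>_. 0))"
    using w by (auto simp: ker_pi_def)
  have "w \<in> zspan S0" using main[OF wk] w0 by simp
  then show ?thesis using G unfolding CW_def by blast
qed

lemma L_closed:
  "x \<in> L_lattice d r Q1 \<Longrightarrow> y \<in> L_lattice d r Q1 \<Longrightarrow> x - y \<in> L_lattice d r Q1"
  "x \<in> L_lattice d r Q1 \<Longrightarrow> y \<in> L_lattice d r Q1 \<Longrightarrow> x + y \<in> L_lattice d r Q1"
  "x \<in> L_lattice d r Q1 \<Longrightarrow> - x \<in> L_lattice d r Q1"
  "0 \<in> L_lattice d r Q1"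
  unfolding L_lattice_def by (auto intro: zspan_diff zspan.add zspan.neg zspan.zero)

lemma ker_sub_L:
  fixes K :: "'k::field itself"
  assumes gor: "\<exists>u. \<forall>\<rho><d. pairing n u (v \<rho>) = 1"
    and distinct: "\<forall>i\<le>r. \<forall>j\<le>r. i \<noteq> j \<longrightarrow> \<not> lin_equiv n d v (D i) (D j)"
    and consistent: "(J_W d r (quiver_arrows n d v r D) :: (path \<Rightarrow>\<^sub>0 'k) set)
                       = J_E r (quiver_arrows n d v r D)"
  shows "ker_pi (quiver_arrows n d v r D) \<subseteq> L_lattice d r (quiver_arrows n d v r D)"
proof
  let ?Q = "quiver_arrows n d v r D"
  let ?L = "L_lattice d r ?Q"
  fix w assume w: "w \<in> ker_pi ?Q"
  have conn: "\<forall>i\<le>r. \<forall>j\<le>r. \<exists>p. valid_path r ?Q p \<and> ptail p = i \<and> phead p = j"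
    using path_exists[OF gor distinct] by blast
  have arr: "\<forall>a\<in>?Q. atail a \<le> r \<and> ahead a \<le> r"
    by (auto simp: quiver_arrows_def atail_def ahead_def)
  obtain P N where PN: "valid_path r ?Q P" "valid_path r ?Q N" "ptail P = 0" "phead P = 0"
    "ptail N = 0" "phead N = 0" "w = vvec P - vvec N"
    using ker_closed_walks[OF conn arr w] by blast
  have pdv: "pdiv P = pdiv N"
  proof
    fix \<rho>
    have "snd (pi_map w) \<rho> = 0" using w by (simp add: ker_pi_def)
    then have "int (pdiv P \<rho>) - int (pdiv N \<rho>) = 0"
      unfolding PN(7) pi_diff deg_valid[OF PN(1)] deg_valid[OF PN(2)] by simp
    then show "pdiv P \<rho> = pdiv N \<rho>" by simp
  qed
  then have "(pa_path P - pa_path N :: path \<Rightarrow>\<^sub>0 'k) \<in> J_E r ?Q"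
    unfolding J_E_def
  proof (intro ideal_gen.gen CollectI exI conjI)
    show "(pa_path P - pa_path N :: path \<Rightarrow>\<^sub>0 'k) = pa_path P - pa_path N" ..
  qed (use PN pdv in simp_all)
  then have inJW: "(pa_path P - pa_path N :: path \<Rightarrow>\<^sub>0 'k) \<in> J_W d r ?Q"
    using consistent by simp
  have gens: "\<forall>s\<in>{pa_path p - pa_path p' | p p' q. q \<in> Pset d r ?Q \<and> derivW d r ?Q q = {p, p'}}.
      \<forall>i j c. csum (Cls r ?Q ?L i j c) (s :: path \<Rightarrow>\<^sub>0 'k) = 0"
  proof (intro ballI allI)
    fix s :: "path \<Rightarrow>\<^sub>0 'k" and i j c
    assume "s \<in> {pa_path p - pa_path p' | p p' q. q \<in> Pset d r ?Q \<and> derivW d r ?Q q = {p, p'}}"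
    then obtain p p' q where s: "s = pa_path p - pa_path p'" and q: "q \<in> Pset d r ?Q"
      and dq: "derivW d r ?Q q = {p, p'}" by blast
    have m: "p \<in> derivW d r ?Q q" "p' \<in> derivW d r ?Q q" using dq by auto
    note same = derivW_pair_same[OF m]
    have inL: "vvec p - vvec p' \<in> ?L" unfolding L_lattice_def using q dq by (intro zspan.gen) blast
    have "vvec p - c \<in> ?L \<longleftrightarrow> vvec p' - c \<in> ?L"
    proof
      assume "vvec p - c \<in> ?L"
      from L_closed(1)[OF this inL] show "vvec p' - c \<in> ?L" by simp
    next
      assume "vvec p' - c \<in> ?L"
      from L_closed(2)[OF this inL] show "vvec p - c \<in> ?L" by simp
    qed
    then have "p \<in> Cls r ?Q ?L i j c \<longleftrightarrow> p' \<in> Cls r ?Q ?L i j c"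
      using same by (auto simp: Cls_def)
    then show "csum (Cls r ?Q ?L i j c) s = 0"
      unfolding s pa_path_def csum_diff csum_single by simp
  qed
  have "\<forall>i j c. csum (Cls r ?Q ?L i j c) (pa_path P - pa_path N :: path \<Rightarrow>\<^sub>0 'k) = 0"
    by (rule inv_lemma[OF inJW[unfolded J_W_def] gens])
  then have c0: "csum (Cls r ?Q ?L 0 0 (vvec P)) (pa_path P - pa_path N :: path \<Rightarrow>\<^sub>0 'k) = 0" by blast
  have PC: "P \<in> Cls r ?Q ?L 0 0 (vvec P)"
    using PN by (simp add: Cls_def L_closed)
  have NC: "N \<in> Cls r ?Q ?L 0 0 (vvec P)"
  proof (rule ccontr)
    assume "N \<notin> Cls r ?Q ?L 0 0 (vvec P)"
    then have "csum (Cls r ?Q ?L 0 0 (vvec P)) (pa_path P - pa_path N :: path \<Rightarrow>\<^sub>0 'k) = 1"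
      using PC unfolding pa_path_def csum_diff csum_single by simp
    with c0 show False by simp
  qed
  then have "vvec N - vvec P \<in> ?L" by (simp add: Cls_def)
  then have "- (vvec N - vvec P) \<in> ?L" by (rule L_closed(3))
  then show "w \<in> ?L" using PN(7) by simp
qed

section \<open>Homogeneity\<close>

definition sub_deg :: "(nat \<Rightarrow> int) \<times> (nat \<Rightarrow> int) \<Rightarrow> (nat \<Rightarrow> int) \<times> (nat \<Rightarrow> int) \<Rightarrow> (nat \<Rightarrow> int) \<times> (nat \<Rightarrow> int)" where
  "sub_deg g e = ((\<lambda>i. fst g i - fst e i), (\<lambda>\<rho>. snd g \<rho> - snd e \<rho>))"

lemma pi_add_eq:
  "pi_map (x + y) = g \<longleftrightarrow> pi_map x = sub_deg g (pi_map y)"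
  "pi_map (x + y) = g \<longleftrightarrow> pi_map y = sub_deg g (pi_map x)"
  by (auto simp: prod_eq_iff fun_eq_iff pi_add sub_deg_def algebra_simps)

lemma lookup_homog:
  "Poly_Mapping.lookup (homog_comp g x) p = (if pi_map (vvec p) = g then Poly_Mapping.lookup x p else 0)"
proof -
  have "finite {p. (if pi_map (vvec p) = g then Poly_Mapping.lookup x p else 0) \<noteq> 0}"
    by (rule finite_subset[of _ "Poly_Mapping.keys x"]) (auto simp: in_keys_iff)
  then show ?thesis by (simp add: homog_comp_def)
qed

lemma keys_homog: "Poly_Mapping.keys (homog_comp g x) \<subseteq> Poly_Mapping.keys x"
  by (auto simp: in_keys_iff lookup_homog split: if_splits)

lemma homog_add: "homog_comp g (x + y) = homog_comp g x + homog_comp g y"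
  by (rule poly_mapping_eqI) (simp add: lookup_homog lookup_add)

lemma homog_diff: "homog_comp g (x - y) = homog_comp g x - homog_comp g y"
  by (rule poly_mapping_eqI) (simp add: lookup_homog lookup_minus)

lemma homog_zero[simp]: "homog_comp g 0 = 0"
  by (rule poly_mapping_eqI) (simp add: lookup_homog)

lemma homog_sum: "homog_comp g (sum f I) = (\<Sum>i\<in>I. homog_comp g (f i))"
  by (induction I rule: infinite_finite_induct) (simp_all add: homog_add)

lemma homog_single:
  "homog_comp g (Poly_Mapping.single t c) = (if pi_map (vvec t) = g then Poly_Mapping.single t c else 0)"
  by (rule poly_mapping_eqI) (auto simp: lookup_homog lookup_single when_def)

lemma pa_mult_alt:
  assumes "finite A" "Poly_Mapping.keys u \<subseteq> A" "finite B" "Poly_Mapping.keys x \<subseteq> B"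
  shows "pa_mult r Q1 u x = (\<Sum>p\<in>A. \<Sum>q\<in>B.
      if valid_path r Q1 p \<and> valid_path r Q1 q \<and> ptail p = phead q
      then Poly_Mapping.single (pcomp p q) (Poly_Mapping.lookup u p * Poly_Mapping.lookup x q) else 0)"
proof -
  have "pa_mult r Q1 u x = (\<Sum>p\<in>Poly_Mapping.keys u. \<Sum>q\<in>B.
      if valid_path r Q1 p \<and> valid_path r Q1 q \<and> ptail p = phead q
      then Poly_Mapping.single (pcomp p q) (Poly_Mapping.lookup u p * Poly_Mapping.lookup x q) else 0)"
    unfolding pa_mult_def
    by (intro sum.cong refl sum.mono_neutral_left) (use assms in \<open>auto simp: in_keys_iff\<close>)
  also have "\<dots> = (\<Sum>p\<in>A. \<Sum>q\<in>B.
      if valid_path r Q1 p \<and> valid_path r Q1 q \<and> ptail p = phead q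
      then Poly_Mapping.single (pcomp p q) (Poly_Mapping.lookup u p * Poly_Mapping.lookup x q) else 0)"
    by (intro sum.mono_neutral_left) (use assms in \<open>auto simp: in_keys_iff intro!: sum.neutral\<close>)
  finally show ?thesis .
qed

lemma homog_lmult:
  "homog_comp g (pa_mult r Q1 u x) = (\<Sum>p\<in>Poly_Mapping.keys u.
     pa_mult r Q1 (Poly_Mapping.single p (Poly_Mapping.lookup u p)) (homog_comp (sub_deg g (pi_map (vvec p))) x))"
proof -
  have R: "pa_mult r Q1 (Poly_Mapping.single p (Poly_Mapping.lookup u p)) (homog_comp (sub_deg g (pi_map (vvec p))) x)
     = (\<Sum>q\<in>Poly_Mapping.keys x. homog_comp g (if valid_path r Q1 p \<and> valid_path r Q1 q \<and> ptail p = phead q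
      then Poly_Mapping.single (pcomp p q) (Poly_Mapping.lookup u p * Poly_Mapping.lookup x q) else 0))" for p
  proof -
    have "pa_mult r Q1 (Poly_Mapping.single p (Poly_Mapping.lookup u p)) (homog_comp (sub_deg g (pi_map (vvec p))) x)
      = (\<Sum>p'\<in>{p}. \<Sum>q\<in>Poly_Mapping.keys x.
      if valid_path r Q1 p' \<and> valid_path r Q1 q \<and> ptail p' = phead q
      then Poly_Mapping.single (pcomp p' q) (Poly_Mapping.lookup (Poly_Mapping.single p (Poly_Mapping.lookup u p)) p' *
         Poly_Mapping.lookup (homog_comp (sub_deg g (pi_map (vvec p))) x) q) else 0)"
      by (rule pa_mult_alt) (simp_all add: keys_homog)
    also have "\<dots> = (\<Sum>q\<in>Poly_Mapping.keys x. homog_comp g (if valid_path r Q1 p \<and> valid_path r Q1 q \<and> ptail p = phead q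
      then Poly_Mapping.single (pcomp p q) (Poly_Mapping.lookup u p * Poly_Mapping.lookup x q) else 0))"
      by (auto intro!: sum.cong simp: lookup_homog homog_single vvec_pcomp pi_add_eq(1)[symmetric])
    finally show ?thesis .
  qed
  show ?thesis unfolding R unfolding pa_mult_def homog_sum ..
qed

lemma homog_rmult:
  "homog_comp g (pa_mult r Q1 x u) = (\<Sum>q\<in>Poly_Mapping.keys u.
     pa_mult r Q1 (homog_comp (sub_deg g (pi_map (vvec q))) x) (Poly_Mapping.single q (Poly_Mapping.lookup u q)))"
proof -
  have R: "pa_mult r Q1 (homog_comp (sub_deg g (pi_map (vvec q))) x) (Poly_Mapping.single q (Poly_Mapping.lookup u q))
     = (\<Sum>p\<in>Poly_Mapping.keys x. homog_comp g (if valid_path r Q1 p \<and> valid_path r Q1 q \<and> ptail p = phead q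
      then Poly_Mapping.single (pcomp p q) (Poly_Mapping.lookup x p * Poly_Mapping.lookup u q) else 0))" for q
  proof -
    have "pa_mult r Q1 (homog_comp (sub_deg g (pi_map (vvec q))) x) (Poly_Mapping.single q (Poly_Mapping.lookup u q))
      = (\<Sum>p\<in>Poly_Mapping.keys x. \<Sum>q'\<in>{q}.
      if valid_path r Q1 p \<and> valid_path r Q1 q' \<and> ptail p = phead q'
      then Poly_Mapping.single (pcomp p q') (Poly_Mapping.lookup (homog_comp (sub_deg g (pi_map (vvec q))) x) p *
         Poly_Mapping.lookup (Poly_Mapping.single q (Poly_Mapping.lookup u q)) q') else 0)"
      by (rule pa_mult_alt) (simp_all add: keys_homog)
    also have "\<dots> = (\<Sum>p\<in>Poly_Mapping.keys x. homog_comp g (if valid_path r Q1 p \<and> valid_path r Q1 q \<and> ptail p = phead q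
      then Poly_Mapping.single (pcomp p q) (Poly_Mapping.lookup x p * Poly_Mapping.lookup u q) else 0))"
      by (auto intro!: sum.cong simp: lookup_homog homog_single vvec_pcomp pi_add_eq(2)[symmetric])
    finally show ?thesis .
  qed
  show ?thesis unfolding R unfolding pa_mult_def homog_sum by (rule sum.swap)
qed

lemma ideal_sum:
  "finite I \<Longrightarrow> (\<And>i. i \<in> I \<Longrightarrow> f i \<in> ideal_gen r Q1 S) \<Longrightarrow> sum f I \<in> ideal_gen r Q1 S"
  by (induction I rule: finite_induct) (auto intro: ideal_gen.zero ideal_gen.add)

lemma homog_ideal:
  fixes x :: "path \<Rightarrow>\<^sub>0 'k::field"
  assumes "x \<in> ideal_gen r Q1 S" "\<forall>s\<in>S. \<forall>g. homog_comp g s = s \<or> homog_comp g s = 0"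
  shows "\<forall>g. homog_comp g x \<in> ideal_gen r Q1 S"
  using assms(1)
proof induction
  case zero then show ?case by (simp add: ideal_gen.zero)
next
  case (gen s)
  then show ?case using assms(2) by (metis ideal_gen.gen ideal_gen.zero)
next
  case (add x y) then show ?case by (simp add: homog_add ideal_gen.add)
next
  case (lmult x u) show ?case
  proof
    fix g
    show "homog_comp g (pa_mult r Q1 u x) \<in> ideal_gen r Q1 S"
      unfolding homog_lmult by (rule ideal_sum) (simp, rule ideal_gen.lmult, rule lmult.IH[rule_format])
  qed
next
  case (rmult x u) show ?case
  proof
    fix g
    show "homog_comp g (pa_mult r Q1 x u) \<in> ideal_gen r Q1 S"
      unfolding homog_rmult by (rule ideal_sum) (simp, rule ideal_gen.rmult, rule rmult.IH[rule_format])
  qed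
qed

lemma homog_JE:
  fixes x :: "path \<Rightarrow>\<^sub>0 'k::field"
  assumes "x \<in> J_E r Q1"
  shows "\<forall>g. homog_comp g x \<in> J_E r Q1"
  using assms unfolding J_E_def
proof (rule homog_ideal, intro ballI allI)
  fix s :: "path \<Rightarrow>\<^sub>0 'k" and g
  assume "s \<in> {pa_path p - pa_path p' | p p'.
      valid_path r Q1 p \<and> valid_path r Q1 p' \<and> ptail p = ptail p' \<and> phead p = phead p' \<and> pdiv p = pdiv p'}"
  then obtain p p' where s: "s = pa_path p - pa_path p'" and h: "valid_path r Q1 p" "valid_path r Q1 p'"
    "ptail p = ptail p'" "phead p = phead p'" "pdiv p = pdiv p'" by blast
  have e: "pi_map (vvec p) = pi_map (vvec p')" by (rule deg_eq[OF h])
  have "homog_comp g s = (if pi_map (vvec p) = g then s else 0)"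
    unfolding s pa_path_def homog_diff homog_single e by simp
  then show "homog_comp g s = s \<or> homog_comp g s = 0" by simp
qed

theorem lemma3p14:
  fixes n d r :: nat
    and v :: "nat \<Rightarrow> nat \<Rightarrow> int"
    and D :: "nat \<Rightarrow> nat \<Rightarrow> int"
    and K :: "'k::field itself"
  assumes alg_closed: "\<forall>f :: 'k poly. degree f > 0 \<longrightarrow> (\<exists>x. poly f x = 0)"
    and primitive: "\<forall>\<rho><d. \<forall>m::int. m > 1 \<longrightarrow> \<not> (\<forall>k<n. m dvd v \<rho> k)"
    and rays: "\<forall>\<rho><d. \<not> (\<exists>c::nat \<Rightarrow> real. (\<forall>\<tau>. c \<tau> \<ge> 0) \<and>
                 (\<forall>k<n. real_of_int (v \<rho> k) = (\<Sum>\<tau>\<in>{0..<d} - {\<rho>}. c \<tau> * real_of_int (v \<tau> k))))"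
    and strongly_convex: "\<forall>c::nat \<Rightarrow> real. (\<forall>\<tau>. c \<tau> \<ge> 0) \<and>
                 (\<forall>k<n. (\<Sum>\<tau><d. c \<tau> * real_of_int (v \<tau> k)) = 0) \<longrightarrow> (\<forall>\<tau><d. c \<tau> = 0)"
    and fixed_point: "\<forall>u::nat \<Rightarrow> real. (\<forall>\<rho><d. (\<Sum>k<n. u k * real_of_int (v \<rho> k)) = 0) \<longrightarrow> (\<forall>k<n. u k = 0)"
    and gorenstein: "\<exists>u. \<forall>\<rho><d. pairing n u (v \<rho>) = 1"
    and E0: "lin_equiv n d v (D 0) (\<lambda>_. 0)"
    and distinct: "\<forall>i\<le>r. \<forall>j\<le>r. i \<noteq> j \<longrightarrow> \<not> lin_equiv n d v (D i) (D j)"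
    and consistent: "(J_W d r (quiver_arrows n d v r D) :: (path \<Rightarrow>\<^sub>0 'k) set)
                       = J_E r (quiver_arrows n d v r D)"
  shows "ker_pi (quiver_arrows n d v r D) = L_lattice d r (quiver_arrows n d v r D) \<and>
         (\<forall>x \<in> (J_E r (quiver_arrows n d v r D) :: (path \<Rightarrow>\<^sub>0 'k) set).
            \<forall>\<gamma>. homog_comp \<gamma> x \<in> J_E r (quiver_arrows n d v r D))"
proof
  show "ker_pi (quiver_arrows n d v r D) = L_lattice d r (quiver_arrows n d v r D)"
    using ker_sub_L[OF gorenstein distinct consistent] L_sub_ker by blast
  show "\<forall>x \<in> (J_E r (quiver_arrows n d v r D) :: (path \<Rightarrow>\<^sub>0 'k) set).
            \<forall>\<gamma>. homog_comp \<gamma> x \<in> J_E r (quiver_arrows n d v r D)"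
    using homog_JE by blast
qed

end
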